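(* Let $X$ be a locally finite poset with unique minimal element $0$ and let $f,g:X\to L$ satisfy $g(x)=\langle\bigoplus_{y\le x}f(y)\rangle^+_-$ for all $x\in X$. Then for every $x\in X$, either $|g(x)|\ge|g(y)|$ for all $y\prec x$, or $g(x)=\mathbb{O}$.
   Context: Let $(L^+,\le)$ be a totally ordered set with bottom $\mathbb{O}$ and top $\mathbb{1}$. Let $L^-=\{-a:a\in L^+\}$ be a disjoint copy with reversed order, $L=L^+\cup L^-$ with $-\mathbb{O}=\mathbb{O}$, totally ordered with $L^-$ below $L^+$; $-(-a)=a$; $|a|=a$ on $L^+$, $|a|=-a$ on $L^-$. Symmetric maximum: $a\oplus b=\mathbb{O}$ if $b=-a$, otherwise the one of $a,b$ with larger absolute value. For a finite family $(a_i)_{i\in I}$, the splitting rule gives $\langle\bigoplus_{i\in I}a_i\rangle^+_-:=\big(\bigvee_{a_i\ge\mathbb{O}}a_i\big)\oplus\big(\bigwedge_{a_i<\mathbb{O}}a_i\big)$ (empty sup/inf equal to $\mathbb{O}$); this equals $\bigoplus_{i}a_i$ (independent of parenthesization) when $|I|\le2$ or $\bigvee_ia_i\ne-\bigwedge_ia_i$, and $\mathbb{O}$ otherwise. Locally finite: every interval $[u,v]$ is finite. $y\prec x$ means $x$ covers $y$. *)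

theory Defs
  imports Main
begin

text \<open>Raw representation of L = L+ \<union> L-: Pos a stands for a \<in> L+, Neg a for -a \<in> L-.
  The element Neg bot is excluded (since -O = O).\<close>

datatype 'a sgnv = Pos 'a | Neg 'a

typedef (overloaded) ('a::"{linorder,order_bot,order_top}") symL = "{x::'a sgnv. x \<noteq> Neg bot}"
  by (rule exI[of _ "Pos bot"]) simp

fun sle :: "'a::linorder sgnv \<Rightarrow> 'a sgnv \<Rightarrow> bool" where
  "sle (Neg a) (Neg b) = (b \<le> a)"
| "sle (Neg a) (Pos b) = True"
| "sle (Pos a) (Neg b) = False"
| "sle (Pos a) (Pos b) = (a \<le> b)"

instantiation symL :: ("{linorder,order_bot,order_top}") linorder
begin
definition less_eq_symL :: "'a symL \<Rightarrow> 'a symL \<Rightarrow> bool" where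
  "less_eq_symL x y = sle (Rep_symL x) (Rep_symL y)"
definition less_symL :: "'a symL \<Rightarrow> 'a symL \<Rightarrow> bool" where
  "less_symL x y = (x \<le> y \<and> \<not> y \<le> x)"
instance
proof
  fix x y z :: "'a symL"
  show "(x < y) = (x \<le> y \<and> \<not> y \<le> x)" by (simp add: less_symL_def)
  show "x \<le> x" unfolding less_eq_symL_def by (cases "Rep_symL x") auto
  show "x \<le> y \<Longrightarrow> y \<le> z \<Longrightarrow> x \<le> z" unfolding less_eq_symL_def
    by (cases "Rep_symL x"; cases "Rep_symL y"; cases "Rep_symL z") auto
  show "x \<le> y \<Longrightarrow> y \<le> x \<Longrightarrow> x = y" unfolding less_eq_symL_def
    by (cases "Rep_symL x"; cases "Rep_symL y") (auto simp: Rep_symL_inject[symmetric])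
  show "x \<le> y \<or> y \<le> x" unfolding less_eq_symL_def
    by (cases "Rep_symL x"; cases "Rep_symL y") auto
qed
end

definition zeroL :: "'a::{linorder,order_bot,order_top} symL" where
  "zeroL = Abs_symL (Pos bot)"

definition negL :: "'a::{linorder,order_bot,order_top} symL \<Rightarrow> 'a symL" where
  "negL x = Abs_symL (case Rep_symL x of
      Pos a \<Rightarrow> (if a = bot then Pos bot else Neg a)
    | Neg a \<Rightarrow> Pos a)"

definition absL :: "'a::{linorder,order_bot,order_top} symL \<Rightarrow> 'a symL" where
  "absL x = (if zeroL \<le> x then x else negL x)"

definition smax :: "'a::{linorder,order_bot,order_top} symL \<Rightarrow> 'a symL \<Rightarrow> 'a symL" where
  "smax a b = (if b = negL a then zeroL else if absL b \<le> absL a then a else b)"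

definition split_sum :: "'i set \<Rightarrow> ('i \<Rightarrow> 'a::{linorder,order_bot,order_top} symL) \<Rightarrow> 'a symL" where
  "split_sum I a =
     smax (if {i\<in>I. zeroL \<le> a i} = {} then zeroL else Max (a ` {i\<in>I. zeroL \<le> a i}))
          (if {i\<in>I. a i < zeroL} = {} then zeroL else Min (a ` {i\<in>I. a i < zeroL}))"

text \<open>Covering relation: covered_by y x means y \<prec> x (x covers y).\<close>
definition covered_by :: "'x::order \<Rightarrow> 'x \<Rightarrow> bool" where
  "covered_by y x = (y < x \<and> \<not> (\<exists>z. y < z \<and> z < x))"

end

theory Submission imports Defs begin

lemma Rep_zeroL: "Rep_symL (zeroL::'a::{linorder,order_bot,order_top} symL) = Pos bot"
  unfolding zeroL_def by (simp add: Abs_symL_inverse)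

lemma Rep_negL_Neg: "Rep_symL x = Neg a \<Longrightarrow> Rep_symL (negL x) = Pos a"
  unfolding negL_def by (simp add: Abs_symL_inverse)

lemma Rep_negL_Pos: "Rep_symL x = Pos a \<Longrightarrow> a \<noteq> bot \<Longrightarrow> Rep_symL (negL x) = Neg a"
  unfolding negL_def by (simp add: Abs_symL_inverse)

lemma Rep_negL_bot: "Rep_symL x = Pos bot \<Longrightarrow> Rep_symL (negL x) = Pos bot"
  unfolding negL_def by (simp add: Abs_symL_inverse)

lemma absL_ge0: "zeroL \<le> absL (x::'a::{linorder,order_bot,order_top} symL)"
proof (cases "zeroL \<le> x")
  case True thus ?thesis by (simp add: absL_def)
next
  case False
  then obtain a where "Rep_symL x = Neg a"
    unfolding less_eq_symL_def Rep_zeroL by (cases "Rep_symL x") auto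
  thus ?thesis using False
    by (simp add: absL_def less_eq_symL_def Rep_zeroL Rep_negL_Neg)
qed

lemma absL_zero: "absL zeroL = zeroL"
  by (simp add: absL_def)

lemma absL_pos: "zeroL \<le> x \<Longrightarrow> absL x = x" by (simp add: absL_def)

lemma absL_neg_mono:
  fixes a b :: "'a::{linorder,order_bot,order_top} symL"
  assumes "b \<le> a" "a \<le> zeroL" shows "absL a \<le> absL b"
proof -
  have nb: "\<forall>c. Rep_symL (c::'a symL) \<noteq> Neg bot" using Rep_symL by auto
  show ?thesis
  using assms nb[rule_format, of a] nb[rule_format, of b]
  unfolding absL_def less_eq_symL_def Rep_zeroL
  by (cases "Rep_symL a"; cases "Rep_symL b")
     (auto simp: Rep_negL_Neg Rep_zeroL bot_unique Rep_negL_bot less_eq_symL_def)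
qed

lemma absL_smax_le:
  "absL (smax a b) \<le> max (absL a) (absL (b::'a::{linorder,order_bot,order_top} symL))"
  unfolding smax_def using absL_ge0[of a] by (auto simp: absL_zero le_max_iff_disj)

lemma absL_smax_eq:
  "b \<noteq> negL a \<Longrightarrow> absL (smax a b) = max (absL a) (absL (b::'a::{linorder,order_bot,order_top} symL))"
  unfolding smax_def by auto

lemma smax_zero: "b = negL a \<Longrightarrow> smax a b = zeroL" unfolding smax_def by auto

theorem proposition5:
  fixes f g :: "'x::order \<Rightarrow> 'a::{linorder,order_bot,order_top} symL"
    and z :: 'x
  assumes locfin: "\<And>u v::'x. finite {u..v}"
    and least: "\<And>x. z \<le> x"
    and gdef: "\<And>x. g x = split_sum {y. y \<le> x} f"
  shows "\<forall>x. (\<forall>y. covered_by y x \<longrightarrow> absL (g y) \<le> absL (g x)) \<or> g x = zeroL"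
proof -
  define S where "S x = {i. i \<le> x \<and> zeroL \<le> f i}" for x
  define T where "T x = {i. i \<le> x \<and> f i < zeroL}" for x
  define P where "P x = (if S x = {} then zeroL else Max (f ` S x))" for x
  define N where "N x = (if T x = {} then zeroL else Min (f ` T x))" for x
  have fin: "finite {y. y \<le> x}" for x :: 'x
  proof -
    have "{y. y \<le> x} = {z..x}" using least by auto
    thus ?thesis using locfin by simp
  qed
  have finS: "finite (S x)" for x using fin[of x] unfolding S_def by (rule rev_finite_subset) auto
  have finT: "finite (T x)" for x using fin[of x] unfolding T_def by (rule rev_finite_subset) auto
  have gPN: "g x = smax (P x) (N x)" for x
    unfolding gdef split_sum_def P_def N_def S_def T_def mem_Collect_eq by (rule refl)
  have P0: "zeroL \<le> P x" for x
  proof (cases "S x = {}")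
    case False
    then obtain i where "i \<in> S x" by auto
    hence "f i \<le> Max (f ` S x)" using finS by simp
    thus ?thesis using False \<open>i \<in> S x\<close> unfolding P_def S_def by auto
  qed (simp add: P_def)
  have N0: "N x \<le> zeroL" for x
  proof (cases "T x = {}")
    case False
    then obtain i where "i \<in> T x" by auto
    hence "Min (f ` T x) \<le> f i" using finT by simp
    thus ?thesis using False \<open>i \<in> T x\<close> unfolding N_def T_def by auto
  qed (simp add: N_def)
  have Pmono: "P y \<le> P x" if "y \<le> x" for x y
  proof (cases "S y = {}")
    case True thus ?thesis using P0[of x] by (simp add: P_def)
  next
    case False
    have sub: "S y \<subseteq> S x" using that unfolding S_def by auto
    hence "S x \<noteq> {}" using False by auto
    thus ?thesis using False sub finS[of x] unfolding P_def by (auto intro: Max_mono)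
  qed
  have Nmono: "N x \<le> N y" if "y \<le> x" for x y
  proof (cases "T y = {}")
    case True thus ?thesis using N0[of x] by (simp add: N_def)
  next
    case False
    have sub: "T y \<subseteq> T x" using that unfolding T_def by auto
    hence "T x \<noteq> {}" using False by auto
    thus ?thesis using False sub finT[of x] unfolding N_def by (auto intro: Min_antimono)
  qed
  show ?thesis
  proof (intro allI)
    fix x
    show "(\<forall>y. covered_by y x \<longrightarrow> absL (g y) \<le> absL (g x)) \<or> g x = zeroL"
    proof (cases "N x = negL (P x)")
      case True thus ?thesis using gPN smax_zero by metis
    next
      case False
      have "absL (g y) \<le> absL (g x)" if "y \<le> x" for y
      proof -
        have "absL (g y) \<le> max (absL (P y)) (absL (N y))" using gPN absL_smax_le by metis
        also have "\<dots> \<le> max (absL (P x)) (absL (N x))"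
          using absL_pos[OF P0[of x]] absL_pos[OF P0[of y]] Pmono[OF that]
            absL_neg_mono[OF Nmono[OF that] N0[of y]] by (auto simp: max_def)
        also have "\<dots> = absL (g x)" using gPN absL_smax_eq[OF False] by metis
        finally show ?thesis .
      qed
      thus ?thesis unfolding covered_by_def by auto
    qed
  qed
qed

end
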